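(* Let $A\in\mathbb{R}^{n\times m}$ with $n<m$ have nonzero columns $\alpha_1,\dots,\alpha_m$, let $c_{ij}=\langle\alpha_i,\alpha_j\rangle$ and $\nu(i)=\max_{j\neq i}\frac{|c_{ij}|}{c_{ii}}$. Then every $x\in\mathbb{R}^m$ with $$\|x\|_0\le\frac{1}{2\max_i\nu(i)}\Big(\min_{i\neq j}\frac{c_{ii}}{c_{jj}}-\frac12\Big)$$ is the unique minimizer of $\min_{z\in\mathbb{R}^m}\|z\|_1$ subject to $Az=Ax$; that is, the sparsity level satisfies $SL\ge\frac{1}{2\max_i\nu(i)}\big(\min_{i\neq j}\frac{c_{ii}}{c_{jj}}-\frac12\big)$.
   Context: $[m]=\{1,\dots,m\}$; $\|x\|_0$ is the number of nonzero entries of $x$; the maximum over $i$ and minimum over $i\neq j$ range over $[m]$. The sparsity level $SL$ of $A$ is the largest integer $s$ such that every $x$ with $\|x\|_0\le s$ is uniquely recovered as the minimizer of $\min\|z\|_1$ s.t. $Az=Ax$. *)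

theory Defs
  imports "HOL-Analysis.Analysis"
begin

definition gram :: "real^'m^'n \<Rightarrow> 'm \<Rightarrow> 'm \<Rightarrow> real" where
  "gram A i j = column i A \<bullet> column j A"

definition nu :: "real^'m^'n \<Rightarrow> 'm \<Rightarrow> real" where
  "nu A i = Max {\<bar>gram A i j\<bar> / gram A i i | j. j \<noteq> i}"

definition l0norm :: "real^'m \<Rightarrow> nat" where
  "l0norm x = card {i. x $ i \<noteq> 0}"

definition l1norm :: "real^'m \<Rightarrow> real" where
  "l1norm z = (\<Sum>i\<in>UNIV. \<bar>z $ i\<bar>)"

definition unique_l1_minimizer :: "real^'m^'n \<Rightarrow> real^'m \<Rightarrow> bool" where
  "unique_l1_minimizer A x \<longleftrightarrow>
     (\<forall>z. A *v z = A *v x \<longrightarrow> z \<noteq> x \<longrightarrow> l1norm x < l1norm z)"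

end

theory Submission
  imports Defs
begin

lemma gram_sym: "gram A i j = gram A j i"
  by (simp add: gram_def inner_commute)

lemma gram_pos: "column i A \<noteq> 0 \<Longrightarrow> gram A i i > 0"
  by (simp add: gram_def)

lemma ker_row:
  fixes A :: "real^'m^'n"
  assumes "A *v h = 0"
  shows "(\<Sum>j\<in>UNIV. h$j * gram A i j) = 0"
proof -
  have "column i A \<bullet> (A *v h) = 0" using assms by simp
  then show ?thesis
    unfolding matrix_mult_sum inner_sum_right gram_def scalar_mult_eq_scaleR
    by simp
qed

lemma nu_bound:
  fixes A :: "real^'m^'n"
  assumes "j \<noteq> i"
  shows "\<bar>gram A i j\<bar> / gram A i i \<le> nu A i"
  unfolding nu_def
  by (rule Max_ge) (use assms in auto)

lemma coord_bound:
  fixes A :: "real^'m^'n" and h :: "real^'m"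
  assumes "A *v h = 0" and pos: "gram A i i > 0"
  shows "\<bar>h$i\<bar> \<le> nu A i * (l1norm h - \<bar>h$i\<bar>)"
proof -
  have s: "(\<Sum>j\<in>UNIV. h$j * gram A i j) = h$i * gram A i i + (\<Sum>j\<in>UNIV-{i}. h$j * gram A i j)"
    by (simp add: sum.remove)
  have eq: "h$i * gram A i i = - (\<Sum>j\<in>UNIV-{i}. h$j * gram A i j)"
    using ker_row[OF assms(1), of i] s by linarith
  have "\<bar>h$i\<bar> * gram A i i = \<bar>\<Sum>j\<in>UNIV-{i}. h$j * gram A i j\<bar>"
    using eq pos by (metis abs_minus_cancel abs_mult abs_of_pos)
  also have "\<dots> \<le> (\<Sum>j\<in>UNIV-{i}. \<bar>h$j\<bar> * \<bar>gram A i j\<bar>)"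
    using sum_abs[of "\<lambda>j. h$j * gram A i j" "UNIV-{i}"] by (simp add: abs_mult)
  also have "\<dots> \<le> (\<Sum>j\<in>UNIV-{i}. \<bar>h$j\<bar> * (nu A i * gram A i i))"
  proof (rule sum_mono)
    fix j assume "j \<in> UNIV - {i}"
    then have "\<bar>gram A i j\<bar> / gram A i i \<le> nu A i" using nu_bound by blast
    then have "\<bar>gram A i j\<bar> \<le> nu A i * gram A i i" using pos by (simp add: divide_le_eq)
    then show "\<bar>h$j\<bar> * \<bar>gram A i j\<bar> \<le> \<bar>h$j\<bar> * (nu A i * gram A i i)"
      by (simp add: mult_left_mono)
  qed
  also have "\<dots> = (nu A i * (\<Sum>j\<in>UNIV-{i}. \<bar>h$j\<bar>)) * gram A i i"
    by (simp add: sum_distrib_left sum_distrib_right algebra_simps)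
  also have "(\<Sum>j\<in>UNIV-{i}. \<bar>h$j\<bar>) = l1norm h - \<bar>h$i\<bar>"
    unfolding l1norm_def by (simp add: sum_diff1)
  finally show ?thesis using pos by simp
qed

theorem mainTheorem7:
  fixes A :: "real^'m^'n" and x :: "real^'m"
  assumes "CARD('n) < CARD('m)"
    and "\<And>i. column i A \<noteq> 0"
    and "real (l0norm x) \<le>
           (1 / (2 * Max (range (nu A)))) *
           (Min {gram A i i / gram A j j | i j. i \<noteq> j} - 1/2)"
  shows "unique_l1_minimizer A x"
proof -
  define N where "N = Max (range (nu A))"
  define M where "M = Min {gram A i i / gram A j j | i j. i \<noteq> j}"
  define S where "S = {i. x $ i \<noteq> 0}"
  define s where "s = l0norm x"
  have cardS: "card S = s" unfolding S_def s_def l0norm_def by simp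
  have "CARD('m) \<ge> 2" proof -
    have "0 < CARD('n)" by simp
    then show ?thesis using assms(1) by linarith
  qed
  then obtain a b :: 'm where ab: "a \<noteq> b"
  proof -
    obtain T :: "'m set" where "card T = 2" using ex_card[of 2 "UNIV :: 'm set"] \<open>CARD('m) \<ge> 2\<close> by auto
    then show ?thesis using that by (auto simp: card_2_iff)
  qed
  have nuN: "nu A i \<le> N" for i unfolding N_def by (rule Max_ge) auto
  have nu0: "0 \<le> nu A i" for i
  proof -
    obtain j where "j \<noteq> i" using ab by metis
    then have "\<bar>gram A i j\<bar> / gram A i i \<le> nu A i" by (rule nu_bound)
    moreover have "0 \<le> \<bar>gram A i j\<bar> / gram A i i" using gram_pos[OF assms(2), of i] by (intro divide_nonneg_pos) auto
    ultimately show ?thesis by linarith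
  qed
  have N0: "0 \<le> N" using nu0[of a] nuN[of a] by linarith
  have M1: "M \<le> 1"
  proof -
    have fin: "finite {gram A i i / gram A j j | i j. i \<noteq> j}"
    proof -
      have "{gram A i i / gram A j j | i j. i \<noteq> j} \<subseteq> (\<lambda>(i,j). gram A i i / gram A j j) ` UNIV"
        by auto
      then show ?thesis by (rule finite_subset) simp
    qed
    have pa: "gram A a a > 0" and pb: "gram A b b > 0" using gram_pos assms(2) by auto
    have "M \<le> gram A a a / gram A b b" unfolding M_def by (rule Min_le[OF fin]) (use ab in auto)
    moreover have "M \<le> gram A b b / gram A a a" unfolding M_def by (rule Min_le[OF fin]) (use ab in auto)
    moreover have "gram A a a / gram A b b \<le> 1 \<or> gram A b b / gram A a a \<le> 1"
      using pa pb by (auto simp: divide_le_eq)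
    ultimately show ?thesis by linarith
  qed
  have sN: "real s * N \<le> 1/4"
  proof (cases "N = 0")
    case True then show ?thesis by simp
  next
    case False
    then have Np: "N > 0" using N0 by simp
    have "real s \<le> (1 / (2 * N)) * (M - 1/2)" using assms(3) unfolding s_def N_def M_def .
    also have "\<dots> \<le> (1 / (2 * N)) * (1/2)" using M1 Np by (intro mult_left_mono) auto
    finally have "real s \<le> 1 / (4 * N)" by simp
    then show ?thesis using Np by (simp add: le_divide_eq)
  qed
  show ?thesis unfolding unique_l1_minimizer_def
  proof (intro allI impI)
    fix z assume Az: "A *v z = A *v x" and zx: "z \<noteq> x"
    define h where "h = z - x"
    have Ah: "A *v h = 0" using Az unfolding h_def by (simp add: matrix_vector_mult_diff_distrib)
    have hne: "h \<noteq> 0" using zx unfolding h_def by simp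
    have L: "l1norm h > 0"
    proof -
      obtain k where "h $ k \<noteq> 0" using hne by (metis vec_eq_iff zero_index)
      then have "0 < \<bar>h$k\<bar>" by simp
      also have "\<bar>h$k\<bar> \<le> l1norm h" unfolding l1norm_def
        by (rule member_le_sum) auto
      finally show ?thesis .
    qed
    have ci: "\<bar>h$i\<bar> * (1 + N) \<le> N * l1norm h" for i
    proof -
      have le: "\<bar>h$i\<bar> \<le> l1norm h" unfolding l1norm_def by (rule member_le_sum) auto
      have "\<bar>h$i\<bar> \<le> nu A i * (l1norm h - \<bar>h$i\<bar>)"
        using coord_bound[OF Ah gram_pos[OF assms(2)]] .
      also have "\<dots> \<le> N * (l1norm h - \<bar>h$i\<bar>)" using nuN le by (intro mult_right_mono) auto
      finally show ?thesis by (simp add: algebra_simps)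
    qed
    have "(\<Sum>i\<in>S. \<bar>h$i\<bar>) * (1 + N) = (\<Sum>i\<in>S. \<bar>h$i\<bar> * (1 + N))"
      by (simp add: sum_distrib_right)
    also have "\<dots> \<le> (\<Sum>i\<in>S. N * l1norm h)" by (rule sum_mono) (rule ci)
    also have "\<dots> = real s * N * l1norm h" using cardS by simp
    also have "\<dots> \<le> 1/4 * l1norm h" using sN L by (intro mult_right_mono) auto
    finally have HS: "(\<Sum>i\<in>S. \<bar>h$i\<bar>) * (1 + N) \<le> 1/4 * l1norm h" .
    have HS2: "(\<Sum>i\<in>S. \<bar>h$i\<bar>) < l1norm h / 2"
    proof -
      have "(\<Sum>i\<in>S. \<bar>h$i\<bar>) \<le> (\<Sum>i\<in>S. \<bar>h$i\<bar>) * (1 + N)"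
        proof -
        have "0 \<le> (\<Sum>i\<in>S. \<bar>h$i\<bar>)" by (rule sum_nonneg) simp
        then show ?thesis using N0 by (simp add: algebra_simps)
      qed
      then show ?thesis using HS L by linarith
    qed
    have split: "l1norm v = (\<Sum>i\<in>S. \<bar>v$i\<bar>) + (\<Sum>i\<in>-S. \<bar>v$i\<bar>)" for v :: "real^'m"
      unfolding l1norm_def by (metis Compl_eq_Diff_UNIV finite subset_UNIV sum.subset_diff add.commute)
    have x0: "(\<Sum>i\<in>-S. \<bar>x$i\<bar>) = 0" unfolding S_def by simp
    have zS: "(\<Sum>i\<in>S. \<bar>z$i\<bar>) \<ge> (\<Sum>i\<in>S. \<bar>x$i\<bar>) - (\<Sum>i\<in>S. \<bar>h$i\<bar>)"
    proof -
      have "(\<Sum>i\<in>S. \<bar>x$i\<bar> - \<bar>h$i\<bar>) \<le> (\<Sum>i\<in>S. \<bar>z$i\<bar>)"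
        by (rule sum_mono) (simp add: h_def abs_triangle_ineq2_sym)
      then show ?thesis by (simp add: sum_subtractf)
    qed
    have zC: "(\<Sum>i\<in>-S. \<bar>z$i\<bar>) = (\<Sum>i\<in>-S. \<bar>h$i\<bar>)"
      by (rule sum.cong) (auto simp: h_def S_def)
    have "(\<Sum>i\<in>-S. \<bar>h$i\<bar>) = l1norm h - (\<Sum>i\<in>S. \<bar>h$i\<bar>)" using split[of h] by simp
    then show "l1norm x < l1norm z"
      using split[of x] split[of z] x0 zS zC HS2 by linarith
  qed
qed

end
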